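(* Let $E$ be an $\mathbb{R}$-group, $X$ a locally compact (Hausdorff) space not reduced to one point in which every point has a countable base of neighbourhoods, and $\mathcal{H}=(H_\varepsilon)_{\varepsilon\in E}$ a continuous absorptive action of $E$ on $X$ with center $\omega$. Then for every nonconstant continuous group homomorphism $h:E\to\mathbb{R}_+^*$ such that, for every $\alpha\in E$, the set $\{\varepsilon\in E:\varepsilon\ge\alpha\}$ is integrable for $h\cdot m$ ($m$ a Haar measure on $E$), there exists a nontrivial positive Radon measure $\lambda$ on $X$ with $H_\varepsilon(\lambda)=h(\varepsilon^{-1})\lambda$ for all $\varepsilon\in E$. In particular a nontrivial $\mathcal{H}$-homogeneous positive Radon measure on $X$ always exists.
   Context: An $\mathbb{R}$-group is an abelian group $E$ (operation written multiplicatively) whose underlying set is a subset of $\mathbb{R}$ containing all positive integers, such that: (RG1) with the natural order of $\mathbb{R}$, $E$ is a totally ordered group; (RG2) with the topology induced from $\mathbb{R}$, $E$ is a locally compact group; (RG3) there is at least one nonconstant continuous homomorphism $h:E\to\mathbb{R}_+^*$ such that for every $\alpha\in E$ the set $\{\varepsilon\in E:\varepsilon\ge\alpha\}$ is integrable for $h\cdot m$, $m$ a Haar measure on $E$. $e$ is the identity of $E$, $\varepsilon^{-1}$ the group inverse; inequalities refer to the order of $\mathbb{R}$. An action of $E$ on $X$ is a family $(H_\varepsilon)_{\varepsilon\in E}$ of bijections of $X$ with $H_\varepsilon\circ H_{\varepsilon'}=H_{\varepsilon\varepsilon'}$, $H_e=\mathrm{id}_X$; continuous if $(\varepsilon,x)\mapsto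 H_\varepsilon(x)$ is continuous on $E\times X$; absorptive if some $\omega\in X$ satisfies: for every neighbourhood $V$ of $\omega$ and every $x\in X$ there are a neighbourhood $U$ of $x$ and $\alpha\in E$ with $H_{\varepsilon^{-1}}(U)\subset V$ for all $\varepsilon\le\alpha$; this $\omega$ is unique and called the center. $H_\varepsilon(\lambda)$ is the image measure $\varphi\mapsto\int\varphi(H_\varepsilon(x))\,d\lambda(x)$, $\varphi\in\mathcal{K}(X)$. A positive Radon measure $\lambda$ is $\mathcal{H}$-homogeneous if for each $\varepsilon$ there is $c(\varepsilon)>0$ with $H_\varepsilon(\lambda)=c(\varepsilon)\lambda$. A Radon measure is nontrivial if it is different from $0$ and from $\delta_\omega$. *)

theory Defs
  imports "HOL-Analysis.Analysis"
begin

definition real_abelian_group :: "real set \<Rightarrow> (real \<Rightarrow> real \<Rightarrow> real) \<Rightarrow> real \<Rightarrow> (real \<Rightarrow> real) \<Rightarrow> bool" where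
  "real_abelian_group E mul e iv \<longleftrightarrow>
     (\<forall>x\<in>E. \<forall>y\<in>E. mul x y \<in> E) \<and>
     (\<forall>x\<in>E. \<forall>y\<in>E. \<forall>z\<in>E. mul (mul x y) z = mul x (mul y z)) \<and>
     (\<forall>x\<in>E. \<forall>y\<in>E. mul x y = mul y x) \<and>
     e \<in> E \<and> (\<forall>x\<in>E. mul e x = x) \<and>
     (\<forall>x\<in>E. iv x \<in> E \<and> mul (iv x) x = e)"

text \<open>Haar measure on the locally compact group E (topology induced from the reals):
  a nonzero Borel measure on E, finite on compact sets, invariant under translations.
  (E is second countable, so locally finite Borel measures on E are automatically Radon.)\<close>
definition haar_measure :: "real set \<Rightarrow> (real \<Rightarrow> real \<Rightarrow> real) \<Rightarrow> real measure \<Rightarrow> bool" where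
  "haar_measure E mul m \<longleftrightarrow>
     sets m = sets (restrict_space borel E) \<and>
     emeasure m E \<noteq> 0 \<and>
     (\<forall>K. K \<subseteq> E \<and> compact K \<longrightarrow> emeasure m K < \<infinity>) \<and>
     (\<forall>a\<in>E. \<forall>A\<in>sets m. emeasure m ((\<lambda>x. mul a x) ` A) = emeasure m A)"

definition pos_char :: "real set \<Rightarrow> (real \<Rightarrow> real \<Rightarrow> real) \<Rightarrow> (real \<Rightarrow> real) \<Rightarrow> bool" where
  "pos_char E mul h \<longleftrightarrow>
     (\<forall>x\<in>E. 0 < h x) \<and> (\<forall>x\<in>E. \<forall>y\<in>E. h (mul x y) = h x * h y) \<and> continuous_on E h"

definition nonconstant_on :: "real set \<Rightarrow> (real \<Rightarrow> real) \<Rightarrow> bool" where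
  "nonconstant_on E h \<longleftrightarrow> (\<exists>x\<in>E. \<exists>y\<in>E. h x \<noteq> h y)"

definition upper_integrable :: "real set \<Rightarrow> real measure \<Rightarrow> (real \<Rightarrow> real) \<Rightarrow> bool" where
  "upper_integrable E m h \<longleftrightarrow> (\<forall>\<alpha>\<in>E. set_integrable m {\<epsilon>\<in>E. \<alpha> \<le> \<epsilon>} h)"

definition R_group :: "real set \<Rightarrow> (real \<Rightarrow> real \<Rightarrow> real) \<Rightarrow> real \<Rightarrow> (real \<Rightarrow> real) \<Rightarrow> bool" where
  "R_group E mul e iv \<longleftrightarrow>
     real_abelian_group E mul e iv \<and>
     (\<forall>n::nat. 1 \<le> n \<longrightarrow> real n \<in> E) \<and>
     \<comment> \<open>(RG1) totally ordered group for the order of the reals\<close>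
     (\<forall>x\<in>E. \<forall>y\<in>E. \<forall>z\<in>E. x \<le> y \<longrightarrow> mul x z \<le> mul y z) \<and>
     \<comment> \<open>(RG2) locally compact topological group for the induced topology\<close>
     continuous_on (E \<times> E) (\<lambda>p. mul (fst p) (snd p)) \<and>
     continuous_on E iv \<and>
     locally_compact_space (top_of_set E) \<and>
     \<comment> \<open>(RG3)\<close>
     (\<exists>h. pos_char E mul h \<and> nonconstant_on E h \<and>
        (\<exists>m. haar_measure E mul m \<and> upper_integrable E m h))"

definition action :: "real set \<Rightarrow> (real \<Rightarrow> real \<Rightarrow> real) \<Rightarrow> real \<Rightarrow> (real \<Rightarrow> 'a \<Rightarrow> 'a) \<Rightarrow> bool" where
  "action E mul e H \<longleftrightarrow>
     (\<forall>\<epsilon>\<in>E. bij (H \<epsilon>)) \<and>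
     (\<forall>\<epsilon>\<in>E. \<forall>\<epsilon>'\<in>E. H \<epsilon> \<circ> H \<epsilon>' = H (mul \<epsilon> \<epsilon>')) \<and>
     H e = id"

definition continuous_action :: "real set \<Rightarrow> (real \<Rightarrow> 'a::topological_space \<Rightarrow> 'a) \<Rightarrow> bool" where
  "continuous_action E H \<longleftrightarrow> continuous_on (E \<times> UNIV) (\<lambda>p. H (fst p) (snd p))"

definition absorptive_center :: "real set \<Rightarrow> (real \<Rightarrow> real) \<Rightarrow> (real \<Rightarrow> 'a::topological_space \<Rightarrow> 'a) \<Rightarrow> 'a \<Rightarrow> bool" where
  "absorptive_center E iv H \<omega> \<longleftrightarrow>
     (\<forall>V. open V \<and> \<omega> \<in> V \<longrightarrow>
        (\<forall>x. \<exists>U. \<exists>\<alpha>\<in>E. open U \<and> x \<in> U \<and> (\<forall>\<epsilon>\<in>E. \<epsilon> \<le> \<alpha> \<longrightarrow> H (iv \<epsilon>) ` U \<subseteq> V)))"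

section \<open>Radon measures (Bourbaki: positive linear forms on K(X))\<close>

definition Kc :: "('a::topological_space \<Rightarrow> real) set" where
  "Kc = {\<phi>. continuous_on UNIV \<phi> \<and> compact (closure {x. \<phi> x \<noteq> 0})}"

definition positive_radon :: "(('a::topological_space \<Rightarrow> real) \<Rightarrow> real) \<Rightarrow> bool" where
  "positive_radon L \<longleftrightarrow>
     (\<forall>\<phi>\<in>Kc. \<forall>\<psi>\<in>Kc. L (\<lambda>x. \<phi> x + \<psi> x) = L \<phi> + L \<psi>) \<and>
     (\<forall>\<phi>\<in>Kc. \<forall>c. L (\<lambda>x. c * \<phi> x) = c * L \<phi>) \<and>
     (\<forall>\<phi>\<in>Kc. (\<forall>x. 0 \<le> \<phi> x) \<longrightarrow> 0 \<le> L \<phi>)"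

text \<open>Nontrivial: different (as a Radon measure, i.e. on K(X)) from 0 and from the Dirac measure at \<omega>.\<close>
definition nontrivial_radon :: "'a::topological_space \<Rightarrow> (('a \<Rightarrow> real) \<Rightarrow> real) \<Rightarrow> bool" where
  "nontrivial_radon \<omega> L \<longleftrightarrow> (\<exists>\<phi>\<in>Kc. L \<phi> \<noteq> 0) \<and> (\<exists>\<phi>\<in>Kc. L \<phi> \<noteq> \<phi> \<omega>)"

definition image_radon :: "('a \<Rightarrow> 'a) \<Rightarrow> (('a \<Rightarrow> real) \<Rightarrow> real) \<Rightarrow> (('a \<Rightarrow> real) \<Rightarrow> real)" where
  "image_radon G L = (\<lambda>\<phi>. L (\<phi> \<circ> G))"

definition homogeneous_radon :: "real set \<Rightarrow> (real \<Rightarrow> 'a::topological_space \<Rightarrow> 'a) \<Rightarrow> (('a \<Rightarrow> real) \<Rightarrow> real) \<Rightarrow> bool" where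
  "homogeneous_radon E H L \<longleftrightarrow> positive_radon L \<and>
     (\<forall>\<epsilon>\<in>E. \<exists>c>0. \<forall>\<phi>\<in>Kc. image_radon (H \<epsilon>) L \<phi> = c * L \<phi>)"

end

theory Submission
  imports Defs
begin

lemma bump_exists:
  fixes x0 \<omega> :: "'a::t2_space"
  assumes lc: "locally_compact_space (euclidean :: 'a topology)" and ne: "x0 \<noteq> \<omega>"
  shows "\<exists>\<phi>\<in>Kc. (\<forall>x. 0 \<le> \<phi> x) \<and> \<phi> \<omega> = 0 \<and> 0 < \<phi> x0"
proof -
  obtain U K where U: "open U" "compact K" "x0 \<in> U" "U \<subseteq> K"
    using lc unfolding locally_compact_space_def by (auto 0 0) blast
  obtain V' where V': "open V'" "x0 \<in> V'" "\<omega> \<notin> V'"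
    using t1_space[OF ne] by blast
  define W where "W = U \<inter> V'"
  have Wo: "open W" using U V' W_def by auto
  have H: "Hausdorff_space (euclidean :: 'a topology)"
    unfolding Hausdorff_space_def disjnt_def using hausdorff by fastforce
  have cr: "completely_regular_space (euclidean :: 'a topology)"
    using locally_compact_regular_imp_completely_regular_space[OF lc] H by blast
  have "closedin euclidean (- W)" using Wo by (simp add: closed_open)
  moreover have "x0 \<in> topspace euclidean - (- W)" using U V' W_def by auto
  ultimately obtain f :: "'a \<Rightarrow> real" where f: "continuous_map euclidean (top_of_set {0..1}) f"
    "f x0 = 0" "f ` (- W) \<subseteq> {1}"
    using cr unfolding completely_regular_space_def by blast
  have fc: "continuous_on UNIV f"
    using f(1) continuous_map_in_subtopology by (metis continuous_map_iff_continuous subtopology_UNIV)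
  define \<phi> where "\<phi> x = max 0 (1/2 - f x)" for x
  have \<phi>c: "continuous_on UNIV \<phi>"
    unfolding \<phi>_def by (intro continuous_intros fc)
  have sub: "{x. \<phi> x \<noteq> 0} \<subseteq> {x. f x \<le> 1/2}" unfolding \<phi>_def by auto
  have cl: "closed {x. f x \<le> 1/2}"
    using closed_Collect_le[OF fc continuous_on_const, of "1/2"] by blast
  have clsub: "closure {x. \<phi> x \<noteq> 0} \<subseteq> {x. f x \<le> 1/2}"
    using closure_minimal[OF sub cl] .
  have "{x. f x \<le> 1/2} \<subseteq> W" using f(3) by force
  hence "closure {x. \<phi> x \<noteq> 0} \<subseteq> K" using clsub U W_def by auto
  hence "compact (closure {x. \<phi> x \<noteq> 0})"
    using compact_Int_closed[OF U(2) closed_closure, of "{x. \<phi> x \<noteq> 0}"]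
    by (simp add: Int_absorb1)
  hence "\<phi> \<in> Kc" unfolding Kc_def using \<phi>c by auto
  moreover have "\<phi> \<omega> = 0" using f(3) V' W_def unfolding \<phi>_def by force
  moreover have "0 < \<phi> x0" using f(2) unfolding \<phi>_def by simp
  moreover have "\<forall>x. 0 \<le> \<phi> x" unfolding \<phi>_def by simp
  ultimately show ?thesis by blast
qed

lemma escape:
  fixes H :: "real \<Rightarrow> 'a::t2_space \<Rightarrow> 'a"
  assumes act: "action E mul e H" and ab: "absorptive_center E iv H \<omega>"
    and eE: "e \<in> E" and ivE: "\<And>x. x \<in> E \<Longrightarrow> iv x \<in> E \<and> mul (iv x) x = e"
    and ne: "x0 \<noteq> \<omega>" and K: "compact K"
  shows "\<exists>\<beta>\<in>E. \<forall>\<eta>\<in>E. \<eta> \<le> \<beta> \<longrightarrow> H \<eta> x0 \<notin> K"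
proof -
  obtain V where V: "open V" "\<omega> \<in> V" "x0 \<notin> V"
    using t1_space[OF ne[symmetric]] by blast
  have "\<forall>y. \<exists>U. \<exists>\<alpha>\<in>E. open U \<and> y \<in> U \<and> (\<forall>\<epsilon>\<in>E. \<epsilon> \<le> \<alpha> \<longrightarrow> H (iv \<epsilon>) ` U \<subseteq> V)"
    using ab V unfolding absorptive_center_def by blast
  hence "\<forall>y. \<exists>U. \<exists>\<alpha>. \<alpha> \<in> E \<and> open U \<and> y \<in> U \<and> (\<forall>\<epsilon>\<in>E. \<epsilon> \<le> \<alpha> \<longrightarrow> H (iv \<epsilon>) ` U \<subseteq> V)"
    by blast
  then obtain Uf where "\<forall>y. \<exists>\<alpha>. \<alpha> \<in> E \<and> open (Uf y) \<and> y \<in> Uf y \<and> (\<forall>\<epsilon>\<in>E. \<epsilon> \<le> \<alpha> \<longrightarrow> H (iv \<epsilon>) ` Uf y \<subseteq> V)"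
    by (rule choice[THEN exE])
  then obtain \<alpha>f where Uf: "\<And>y. \<alpha>f y \<in> E \<and> open (Uf y) \<and> y \<in> Uf y \<and>
      (\<forall>\<epsilon>\<in>E. \<epsilon> \<le> \<alpha>f y \<longrightarrow> H (iv \<epsilon>) ` Uf y \<subseteq> V)"
    by (rule choice[THEN exE]) blast
  have cover: "K \<subseteq> (\<Union>y\<in>K. Uf y)" using Uf by blast
  have opn: "\<And>y. y \<in> K \<Longrightarrow> open (Uf y)" using Uf by blast
  obtain C where C: "C \<subseteq> K" "finite C" "K \<subseteq> (\<Union>y\<in>C. Uf y)"
    by (rule compactE_image[OF K opn cover])
  define \<beta> where "\<beta> = Min (insert e (\<alpha>f ` C))"
  have fin: "finite (insert e (\<alpha>f ` C))" using C by simp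
  have "\<beta> \<in> insert e (\<alpha>f ` C)" unfolding \<beta>_def by (rule Min_in[OF fin]) simp
  hence \<beta>E: "\<beta> \<in> E" using eE Uf by auto
  have \<beta>le: "\<And>y. y \<in> C \<Longrightarrow> \<beta> \<le> \<alpha>f y" unfolding \<beta>_def using Min_le[OF fin] by blast
  have "\<forall>\<eta>\<in>E. \<eta> \<le> \<beta> \<longrightarrow> H \<eta> x0 \<notin> K"
  proof (intro ballI impI notI)
    fix \<eta> assume \<eta>: "\<eta> \<in> E" "\<eta> \<le> \<beta>" "H \<eta> x0 \<in> K"
    have "H \<eta> x0 \<in> (\<Union>y\<in>C. Uf y)" using C(3) \<eta>(3) by (rule subsetD)
    then obtain y where y: "y \<in> C" "H \<eta> x0 \<in> Uf y" by (rule UN_E)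
    have "\<eta> \<le> \<alpha>f y" using \<beta>le[OF y(1)] \<eta> by linarith
    hence "H (iv \<eta>) ` Uf y \<subseteq> V" using Uf[of y] \<eta>(1) by blast
    moreover have "H (iv \<eta>) (H \<eta> x0) \<in> H (iv \<eta>) ` Uf y" by (rule imageI[OF y(2)])
    ultimately have "H (iv \<eta>) (H \<eta> x0) \<in> V" by (rule subsetD)
    moreover have "H (iv \<eta>) (H \<eta> x0) = x0"
    proof -
      have "H (iv \<eta>) \<circ> H \<eta> = H (mul (iv \<eta>) \<eta>)" using act ivE \<eta> unfolding action_def by blast
      also have "\<dots> = id" using act ivE \<eta> unfolding action_def by simp
      finally show ?thesis by (metis comp_apply id_apply)
    qed
    ultimately show False using V by simp
  qed
  thus ?thesis using \<beta>E by blast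
qed

lemma haar_space:
  assumes "haar_measure E mul m"
  shows "space m = E"
proof -
  have "sets m = sets (restrict_space borel E)" using assms unfolding haar_measure_def by blast
  hence "space m = space (restrict_space borel E)" by (rule sets_eq_imp_space_eq)
  thus ?thesis by (simp add: space_restrict_space)
qed

lemma cont_mul_left:
  assumes cont: "continuous_on (E \<times> E) (\<lambda>p. mul (fst p) (snd p))" and a: "a \<in> E"
  shows "continuous_on E (mul a)"
proof -
  have "continuous_on E (\<lambda>x. (a, x))" by (intro continuous_intros)
  moreover have "(\<lambda>x. (a, x)) ` E \<subseteq> E \<times> E" using a by auto
  ultimately have "continuous_on E ((\<lambda>p. mul (fst p) (snd p)) \<circ> (\<lambda>x. (a, x)))"
    using continuous_on_compose continuous_on_subset cont by blast
  thus ?thesis by (simp add: o_def)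
qed

lemma grp:
  assumes "real_abelian_group E mul e iv"
  shows grp_closed: "\<And>x y. x \<in> E \<Longrightarrow> y \<in> E \<Longrightarrow> mul x y \<in> E"
    and grp_assoc: "\<And>x y z. x \<in> E \<Longrightarrow> y \<in> E \<Longrightarrow> z \<in> E \<Longrightarrow> mul (mul x y) z = mul x (mul y z)"
    and grp_comm: "\<And>x y. x \<in> E \<Longrightarrow> y \<in> E \<Longrightarrow> mul x y = mul y x"
    and grp_e: "e \<in> E"
    and grp_lid: "\<And>x. x \<in> E \<Longrightarrow> mul e x = x"
    and grp_ivE: "\<And>x. x \<in> E \<Longrightarrow> iv x \<in> E"
    and grp_linv: "\<And>x. x \<in> E \<Longrightarrow> mul (iv x) x = e"
  using assms unfolding real_abelian_group_def by blast+

lemma grp_cancel: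
  assumes G: "real_abelian_group E mul e iv" and a: "a \<in> E" and x: "x \<in> E"
  shows "mul (iv a) (mul a x) = x" and "mul a (mul (iv a) x) = x"
proof -
  have ia: "iv a \<in> E" using grp_ivE[OF G a] .
  have "mul (iv a) (mul a x) = mul (mul (iv a) a) x" using grp_assoc[OF G ia a x] by simp
  also have "\<dots> = x" using grp_linv[OF G a] grp_lid[OF G x] by simp
  finally show "mul (iv a) (mul a x) = x" .
  have "mul a (mul (iv a) x) = mul (mul a (iv a)) x" using grp_assoc[OF G a ia x] by simp
  also have "\<dots> = mul (mul (iv a) a) x" using grp_comm[OF G a ia] by simp
  also have "\<dots> = x" using grp_linv[OF G a] grp_lid[OF G x] by simp
  finally show "mul a (mul (iv a) x) = x" .
qed

lemma haar_distr:
  assumes G: "real_abelian_group E mul e iv"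
    and cont: "continuous_on (E \<times> E) (\<lambda>p. mul (fst p) (snd p))"
    and haar: "haar_measure E mul m" and a: "a \<in> E"
  shows "distr m m (mul a) = m"
proof -
  have sm: "space m = E" using haar_space[OF haar] .
  have ss: "sets m = sets (restrict_space borel E)" using haar unfolding haar_measure_def by blast
  have meas: "mul a \<in> measurable m m"
  proof -
    have "mul a \<in> measurable (restrict_space borel E) (restrict_space borel E)"
      apply (rule measurable_restrict_space2)
      using grp_closed[OF G a] apply (simp add: space_restrict_space Pi_iff)
      using borel_measurable_continuous_on_restrict[OF cont_mul_left[OF cont a]] .
    thus ?thesis using measurable_cong_sets[OF ss ss] by simp
  qed
  show ?thesis
  proof (rule measure_eqI)
    show "sets (distr m m (mul a)) = sets m" by simp
  next
    fix A assume "A \<in> sets (distr m m (mul a))"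
    hence A: "A \<in> sets m" by simp
    hence AE: "A \<subseteq> E" using sets.sets_into_space sm by blast
    have ia: "iv a \<in> E" using grp_ivE[OF G a] .
    have eq: "mul a -` A \<inter> space m = mul (iv a) ` A"
    proof
      show "mul a -` A \<inter> space m \<subseteq> mul (iv a) ` A"
      proof
        fix x assume "x \<in> mul a -` A \<inter> space m"
        hence x: "x \<in> E" "mul a x \<in> A" using sm by auto
        have "mul (iv a) (mul a x) = x" using grp_cancel[OF G a x(1)] by simp
        thus "x \<in> mul (iv a) ` A" using x by (metis image_eqI)
      qed
    next
      show "mul (iv a) ` A \<subseteq> mul a -` A \<inter> space m"
      proof
        fix x assume "x \<in> mul (iv a) ` A"
        then obtain y where y: "y \<in> A" "x = mul (iv a) y" by blast
        have yE: "y \<in> E" using y AE by blast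
        have xE: "x \<in> E" using grp_closed[OF G ia yE] y by simp
        have "mul a x = y" using grp_cancel[OF G a yE] y by simp
        thus "x \<in> mul a -` A \<inter> space m" using y xE sm by simp
      qed
    qed
    have "emeasure (distr m m (mul a)) A = emeasure m (mul a -` A \<inter> space m)"
      using emeasure_distr[OF meas A] .
    also have "\<dots> = emeasure m (mul (iv a) ` A)" using eq by simp
    also have "\<dots> = emeasure m A" using haar ia A unfolding haar_measure_def by blast
    finally show "emeasure (distr m m (mul a)) A = emeasure m A" .
  qed
qed

lemma openin_sets:
  assumes haar: "haar_measure E mul m" and X: "openin (top_of_set E) X"
  shows "X \<in> sets m"
proof -
  have ss: "sets m = sets (restrict_space borel E)" using haar unfolding haar_measure_def by blast
  obtain Ob where Ob: "open Ob" "X = E \<inter> Ob" using X by (auto simp: openin_open)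
  have "Ob \<in> sets borel" using Ob(1) by simp
  hence "E \<inter> Ob \<in> sets (restrict_space borel E)" unfolding sets_restrict_space by blast
  thus ?thesis using Ob ss by simp
qed

lemma open_pos:
  assumes G: "real_abelian_group E mul e iv"
    and cont: "continuous_on (E \<times> E) (\<lambda>p. mul (fst p) (snd p))"
    and haar: "haar_measure E mul m" and S: "openin (top_of_set E) S" and s0: "s0 \<in> S"
  shows "emeasure m S \<noteq> 0"
proof
  assume S0: "emeasure m S = 0"
  have SE: "S \<subseteq> E" using S by (rule openin_imp_subset)
  obtain Ob where Ob: "open Ob" "S = E \<inter> Ob" using S by (auto simp: openin_open)
  define T where "T b = mul b ` S" for b
  have Teq: "T b = E \<inter> mul (iv b) -` Ob" if b: "b \<in> E" for b
  proof
    show "T b \<subseteq> E \<inter> mul (iv b) -` Ob"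
    proof
      fix x assume "x \<in> T b"
      then obtain s where s: "s \<in> S" "x = mul b s" unfolding T_def by blast
      have sE: "s \<in> E" using s SE by blast
      have "mul (iv b) x = s" using grp_cancel[OF G b sE] s by simp
      thus "x \<in> E \<inter> mul (iv b) -` Ob" using s Ob grp_closed[OF G b sE] by auto
    qed
  next
    show "E \<inter> mul (iv b) -` Ob \<subseteq> T b"
    proof
      fix x assume x: "x \<in> E \<inter> mul (iv b) -` Ob"
      have xE: "x \<in> E" using x by blast
      have "mul (iv b) x \<in> S" using x Ob grp_closed[OF G grp_ivE[OF G b] xE] by blast
      moreover have "x = mul b (mul (iv b) x)" using grp_cancel[OF G b xE] by simp
      ultimately show "x \<in> T b" unfolding T_def by blast
    qed
  qed
  have Topen: "openin (top_of_set E) (T b)" if b: "b \<in> E" for b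
    using continuous_openin_preimage_gen[OF cont_mul_left[OF cont grp_ivE[OF G b]] Ob(1)] Teq[OF b]
    by simp
  have Snull: "T b \<in> null_sets m" if b: "b \<in> E" for b
  proof
    have "S \<in> sets m" using openin_sets[OF haar S] .
    hence "emeasure m (T b) = emeasure m S" using haar b unfolding haar_measure_def T_def by blast
    thus "emeasure m (T b) = 0" using S0 by simp
    show "T b \<in> sets m" using openin_sets[OF haar Topen[OF b]] .
  qed
  have cov: "\<Union>(T ` E) = E"
  proof
    show "\<Union>(T ` E) \<subseteq> E" using Teq by blast
  next
    show "E \<subseteq> \<Union>(T ` E)"
    proof
      fix a assume a: "a \<in> E"
      have s0E: "s0 \<in> E" using s0 SE by blast
      have is0: "iv s0 \<in> E" using grp_ivE[OF G s0E] .
      have bE: "mul a (iv s0) \<in> E" using grp_closed[OF G a is0] .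
      have "mul (mul a (iv s0)) s0 = mul a (mul (iv s0) s0)" using grp_assoc[OF G a is0 s0E] .
      also have "\<dots> = mul a e" using grp_linv[OF G s0E] by simp
      also have "\<dots> = a" using grp_comm[OF G a grp_e[OF G]] grp_lid[OF G a] by simp
      finally have "a \<in> T (mul a (iv s0))" unfolding T_def using s0 by (metis image_eqI)
      thus "a \<in> \<Union>(T ` E)" using bE by blast
    qed
  qed
  obtain F where F: "F \<subseteq> T ` E" "countable F" "\<Union>F = \<Union>(T ` E)"
    using Lindelof_openin[of "T ` E" E] Topen by blast
  have "(\<Union>X\<in>F. X) \<in> null_sets m"
    using null_sets_UN'[OF F(2), of id m] F(1) Snull by auto
  hence "E \<in> null_sets m" using F(3) cov by simp
  thus False using haar unfolding haar_measure_def by blast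
qed

lemma mul_meas:
  assumes G: "real_abelian_group E mul e iv"
    and cont: "continuous_on (E \<times> E) (\<lambda>p. mul (fst p) (snd p))"
    and haar: "haar_measure E mul m" and a: "a \<in> E"
  shows "mul a \<in> measurable m m"
proof -
  have ss: "sets m = sets (restrict_space borel E)" using haar unfolding haar_measure_def by blast
  have "mul a \<in> measurable (restrict_space borel E) (restrict_space borel E)"
    apply (rule measurable_restrict_space2)
    using grp_closed[OF G a] apply (simp add: space_restrict_space Pi_iff)
    using borel_measurable_continuous_on_restrict[OF cont_mul_left[OF cont a]] .
  thus ?thesis using measurable_cong_sets[OF ss ss] by simp
qed

theorem theorem3p1:
  fixes E :: "real set" and mul :: "real \<Rightarrow> real \<Rightarrow> real" and e :: real and iv :: "real \<Rightarrow> real"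
    and H :: "real \<Rightarrow> 'a::{t2_space, first_countable_topology} \<Rightarrow> 'a" and \<omega> :: 'a
  assumes "R_group E mul e iv"
    and "locally_compact_space (euclidean :: 'a topology)"
    and "\<exists>x y :: 'a. x \<noteq> y"
    and "action E mul e H" and "continuous_action E H" and "absorptive_center E iv H \<omega>"
  shows "(\<forall>h m. pos_char E mul h \<and> nonconstant_on E h \<and> haar_measure E mul m \<and> upper_integrable E m h \<longrightarrow>
            (\<exists>L. positive_radon L \<and> nontrivial_radon \<omega> L \<and>
                 (\<forall>\<epsilon>\<in>E. \<forall>\<phi>\<in>Kc. image_radon (H \<epsilon>) L \<phi> = h (iv \<epsilon>) * L \<phi>)))
       \<and> (\<exists>L. homogeneous_radon E H L \<and> nontrivial_radon \<omega> L)"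
proof -
  note RG = assms(1)[unfolded R_group_def]
  have G: "real_abelian_group E mul e iv" using RG by blast
  have cont: "continuous_on (E \<times> E) (\<lambda>p. mul (fst p) (snd p))" using RG by blast
  have lc: "locally_compact_space (euclidean :: 'a topology)" using assms(2) .
  have act: "action E mul e H" using assms(4) .
  have ab: "absorptive_center E iv H \<omega>" using assms(6) .
  have Hcomp: "\<And>a b. a \<in> E \<Longrightarrow> b \<in> E \<Longrightarrow> H a \<circ> H b = H (mul a b)"
    using act unfolding action_def by blast
  have He: "H e = id" using act unfolding action_def by blast
  obtain x0 where x0: "x0 \<noteq> \<omega>" using assms(3) by metis
  have Hc: "continuous_on E (\<lambda>\<eta>. H \<eta> x0)"
  proof -
    have c: "continuous_on (E \<times> UNIV) (\<lambda>p. H (fst p) (snd p))"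
      using assms(5) unfolding continuous_action_def .
    have "continuous_on E (\<lambda>\<eta>. (\<eta>, x0))" by (intro continuous_intros)
    moreover have "(\<lambda>\<eta>. (\<eta>, x0)) ` E \<subseteq> E \<times> UNIV" by auto
    ultimately have "continuous_on E ((\<lambda>p. H (fst p) (snd p)) \<circ> (\<lambda>\<eta>. (\<eta>, x0)))"
      using continuous_on_compose continuous_on_subset c by blast
    thus ?thesis by (simp add: o_def)
  qed
  have main: "\<forall>h m. pos_char E mul h \<and> nonconstant_on E h \<and> haar_measure E mul m \<and> upper_integrable E m h \<longrightarrow>
            (\<exists>L. positive_radon L \<and> nontrivial_radon \<omega> L \<and>
                 (\<forall>\<epsilon>\<in>E. \<forall>\<phi>\<in>Kc. image_radon (H \<epsilon>) L \<phi> = h (iv \<epsilon>) * L \<phi>))"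
  proof (intro allI impI)
    fix h m
    assume hm: "pos_char E mul h \<and> nonconstant_on E h \<and> haar_measure E mul m \<and> upper_integrable E m h"
    have hpos: "\<And>x. x \<in> E \<Longrightarrow> 0 < h x" using hm unfolding pos_char_def by blast
    have hmult: "\<And>x y. x \<in> E \<Longrightarrow> y \<in> E \<Longrightarrow> h (mul x y) = h x * h y"
      using hm unfolding pos_char_def by blast
    have hc: "continuous_on E h" using hm unfolding pos_char_def by blast
    have haar: "haar_measure E mul m" using hm by blast
    have ui: "\<And>\<alpha>. \<alpha> \<in> E \<Longrightarrow> set_integrable m {\<epsilon>\<in>E. \<alpha> \<le> \<epsilon>} h"
      using hm unfolding upper_integrable_def by blast
    have sm: "space m = E" using haar_space[OF haar] .
    have ss: "sets m = sets (restrict_space borel E)" using haar unfolding haar_measure_def by blast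
    define L where "L \<phi> = integral\<^sup>L m (\<lambda>\<eta>. h \<eta> * \<phi> (H \<eta> x0))" for \<phi> :: "'a \<Rightarrow> real"
    have fc: "continuous_on E (\<lambda>\<eta>. h \<eta> * \<phi> (H \<eta> x0))" if "\<phi> \<in> Kc" for \<phi>
    proof -
      have "continuous_on UNIV \<phi>" using that unfolding Kc_def by blast
      hence "continuous_on E (\<phi> \<circ> (\<lambda>\<eta>. H \<eta> x0))"
        using continuous_on_compose[OF Hc] continuous_on_subset by blast
      thus ?thesis using hc by (intro continuous_intros) (auto simp: o_def)
    qed
    have meas: "(\<lambda>\<eta>. h \<eta> * \<phi> (H \<eta> x0)) \<in> borel_measurable m" if "\<phi> \<in> Kc" for \<phi>
      using borel_measurable_continuous_on_restrict[OF fc[OF that]] measurable_cong_sets[OF ss, of "borel :: real measure" borel]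
      by simp
    have integ: "integrable m (\<lambda>\<eta>. h \<eta> * \<phi> (H \<eta> x0))" if \<phi>: "\<phi> \<in> Kc" for \<phi>
    proof -
      define K where "K = closure {x. \<phi> x \<noteq> 0}"
      have K: "compact K" using \<phi> unfolding K_def by (simp add: Kc_def)
      have \<phi>c: "continuous_on UNIV \<phi>" using \<phi> unfolding Kc_def by blast
      have "compact (\<phi> ` K)"
        by (rule compact_continuous_image[OF continuous_on_subset[OF \<phi>c subset_UNIV] K])
      hence "bounded (\<phi> ` K)" by (rule compact_imp_bounded)
      then obtain B where B: "\<forall>y\<in>\<phi> ` K. norm y \<le> B" unfolding bounded_iff by blast
      have zero: "\<phi> x = 0" if "x \<notin> K" for x
      proof (rule ccontr)
        assume "\<phi> x \<noteq> 0"
        hence "x \<in> {x. \<phi> x \<noteq> 0}" by simp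
        hence "x \<in> K" unfolding K_def using closure_subset by (rule subsetD[rotated])
        thus False using that by simp
      qed
      have Bd: "\<bar>\<phi> x\<bar> \<le> max B 0" for x
      proof (cases "x \<in> K")
        case True
        hence "norm (\<phi> x) \<le> B" using B by blast
        thus ?thesis by simp
      next
        case False
        thus ?thesis using zero[OF False] by simp
      qed
      have "\<exists>\<beta>\<in>E. \<forall>\<eta>\<in>E. \<eta> \<le> \<beta> \<longrightarrow> H \<eta> x0 \<notin> K"
        by (rule escape[OF act ab grp_e[OF G] _ x0 K]) (use grp_ivE[OF G] grp_linv[OF G] in blast)
      then obtain \<beta> where \<beta>: "\<beta> \<in> E" "\<forall>\<eta>\<in>E. \<eta> \<le> \<beta> \<longrightarrow> H \<eta> x0 \<notin> K" by blast
      have i1: "integrable m (\<lambda>x. indicator {\<epsilon>\<in>E. \<beta> \<le> \<epsilon>} x *\<^sub>R h x)"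
        using ui[OF \<beta>(1)] unfolding set_integrable_def .
      have i2: "integrable m (\<lambda>x. max B 0 * (indicator {\<epsilon>\<in>E. \<beta> \<le> \<epsilon>} x *\<^sub>R h x))"
        using integrable_mult_right[OF i1] .
      show ?thesis
      proof (rule Bochner_Integration.integrable_bound[OF i2 meas[OF \<phi>]], rule AE_I2)
        fix x assume "x \<in> space m"
        hence xE: "x \<in> E" using sm by simp
        show "norm (h x * \<phi> (H x x0)) \<le> norm (max B 0 * (indicator {\<epsilon>\<in>E. \<beta> \<le> \<epsilon>} x *\<^sub>R h x))"
        proof (cases "\<beta> \<le> x")
          case True
          have hx: "0 < h x" using hpos[OF xE] .
          have ind: "indicator {\<epsilon>\<in>E. \<beta> \<le> \<epsilon>} x = (1::real)" using True xE by (simp add: indicator_def)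
          have "norm (h x * \<phi> (H x x0)) = h x * \<bar>\<phi> (H x x0)\<bar>" using hx by (simp add: abs_mult)
          also have "\<dots> \<le> h x * max B 0" using hx Bd[of "H x x0"] by (simp add: mult_left_mono)
          also have "\<dots> = norm (max B 0 * (indicator {\<epsilon>\<in>E. \<beta> \<le> \<epsilon>} x *\<^sub>R h x))"
            using hx ind by (simp add: abs_mult)
          finally show ?thesis .
        next
          case False
          hence "x \<le> \<beta>" by simp
          hence "H x x0 \<notin> K" using \<beta>(2) xE by blast
          hence "\<phi> (H x x0) = 0" by (rule zero)
          thus ?thesis by simp
        qed
      qed
    qed
    have nonneg: "0 \<le> L \<phi>" if "\<phi> \<in> Kc" "\<forall>x. 0 \<le> \<phi> x" for \<phi>
      unfolding L_def
    proof (rule Bochner_Integration.integral_nonneg)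
      fix x assume "x \<in> space m"
      hence "0 < h x" using hpos sm by simp
      thus "0 \<le> h x * \<phi> (H x x0)" using that(2) by simp
    qed
    have pos: "positive_radon L"
      unfolding positive_radon_def
    proof (intro conjI ballI allI impI)
      fix \<phi> \<psi> :: "'a \<Rightarrow> real" assume a: "\<phi> \<in> Kc" "\<psi> \<in> Kc"
      have "L (\<lambda>x. \<phi> x + \<psi> x) = integral\<^sup>L m (\<lambda>\<eta>. h \<eta> * \<phi> (H \<eta> x0) + h \<eta> * \<psi> (H \<eta> x0))"
        unfolding L_def by (simp add: distrib_left)
      also have "\<dots> = L \<phi> + L \<psi>" unfolding L_def
        by (rule Bochner_Integration.integral_add[OF integ[OF a(1)] integ[OF a(2)]])
      finally show "L (\<lambda>x. \<phi> x + \<psi> x) = L \<phi> + L \<psi>" .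
    next
      fix \<phi> :: "'a \<Rightarrow> real" and c :: real assume "\<phi> \<in> Kc"
      have "L (\<lambda>x. c * \<phi> x) = integral\<^sup>L m (\<lambda>\<eta>. c * (h \<eta> * \<phi> (H \<eta> x0)))"
        unfolding L_def by (simp add: ac_simps)
      also have "\<dots> = c * L \<phi>" unfolding L_def by (rule integral_mult_right_zero)
      finally show "L (\<lambda>x. c * \<phi> x) = c * L \<phi>" .
    next
      fix \<phi> :: "'a \<Rightarrow> real" assume "\<phi> \<in> Kc" "\<forall>x. 0 \<le> \<phi> x"
      thus "0 \<le> L \<phi>" by (rule nonneg)
    qed
    have equiv: "image_radon (H \<epsilon>) L \<phi> = h (iv \<epsilon>) * L \<phi>" if \<epsilon>: "\<epsilon> \<in> E" and \<phi>: "\<phi> \<in> Kc" for \<epsilon> \<phi>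
    proof -
      have i\<epsilon>: "iv \<epsilon> \<in> E" using grp_ivE[OF G \<epsilon>] .
      define Gf where "Gf \<zeta> = h (mul (iv \<epsilon>) \<zeta>) * \<phi> (H \<zeta> x0)" for \<zeta>
      have Geq: "Gf \<zeta> = h (iv \<epsilon>) * (h \<zeta> * \<phi> (H \<zeta> x0))" if "\<zeta> \<in> E" for \<zeta>
        unfolding Gf_def using hmult[OF i\<epsilon> that] by simp
      have Gmeas: "Gf \<in> borel_measurable m"
      proof -
        have "(\<lambda>\<zeta>. h (iv \<epsilon>) * (h \<zeta> * \<phi> (H \<zeta> x0))) \<in> borel_measurable m"
          using borel_measurable_times[OF borel_measurable_const meas[OF \<phi>]] .
        moreover have "Gf \<in> borel_measurable m \<longleftrightarrow> (\<lambda>\<zeta>. h (iv \<epsilon>) * (h \<zeta> * \<phi> (H \<zeta> x0))) \<in> borel_measurable m"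
          by (rule measurable_cong) (simp add: Geq sm)
        ultimately show ?thesis by simp
      qed
      have "image_radon (H \<epsilon>) L \<phi> = integral\<^sup>L m (\<lambda>\<eta>. h \<eta> * \<phi> (H \<epsilon> (H \<eta> x0)))"
        unfolding image_radon_def L_def by simp
      also have "\<dots> = integral\<^sup>L m (\<lambda>\<eta>. Gf (mul \<epsilon> \<eta>))"
      proof (rule Bochner_Integration.integral_cong[OF refl])
        fix \<eta> assume "\<eta> \<in> space m"
        hence \<eta>: "\<eta> \<in> E" using sm by simp
        have "H \<epsilon> (H \<eta> x0) = H (mul \<epsilon> \<eta>) x0" using fun_cong[OF Hcomp[OF \<epsilon> \<eta>], of x0] by simp
        moreover have "mul (iv \<epsilon>) (mul \<epsilon> \<eta>) = \<eta>" using grp_cancel[OF G \<epsilon> \<eta>] by simp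
        ultimately show "h \<eta> * \<phi> (H \<epsilon> (H \<eta> x0)) = Gf (mul \<epsilon> \<eta>)" unfolding Gf_def by simp
      qed
      also have "\<dots> = integral\<^sup>L (distr m m (mul \<epsilon>)) Gf"
        using integral_distr[OF mul_meas[OF G cont haar \<epsilon>] Gmeas] by simp
      also have "\<dots> = integral\<^sup>L m Gf" using haar_distr[OF G cont haar \<epsilon>] by simp
      also have "\<dots> = integral\<^sup>L m (\<lambda>\<zeta>. h (iv \<epsilon>) * (h \<zeta> * \<phi> (H \<zeta> x0)))"
        by (rule Bochner_Integration.integral_cong[OF refl]) (use Geq sm in auto)
      also have "\<dots> = h (iv \<epsilon>) * L \<phi>" unfolding L_def by (rule integral_mult_right_zero)
      finally show ?thesis .
    qed
    have nontriv: "nontrivial_radon \<omega> L"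
    proof -
      obtain \<phi>0 where \<phi>0: "\<phi>0 \<in> Kc" "\<forall>x. 0 \<le> \<phi>0 x" "\<phi>0 \<omega> = 0" "0 < \<phi>0 x0"
      proof -
        from bump_exists[OF lc x0] obtain \<phi> where "\<phi> \<in> Kc" "(\<forall>x. 0 \<le> \<phi> x) \<and> \<phi> \<omega> = 0 \<and> 0 < \<phi> x0"
          by (rule bexE)
        thus ?thesis using that by blast
      qed
      define f0 where "f0 \<eta> = h \<eta> * \<phi>0 (H \<eta> x0)" for \<eta>
      define S where "S = E \<inter> f0 -` {0<..}"
      have Sopen: "openin (top_of_set E) S"
        unfolding S_def f0_def by (rule continuous_openin_preimage_gen[OF fc[OF \<phi>0(1)] open_greaterThan])
      have f0nn: "0 \<le> f0 x" if "x \<in> E" for x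
      proof -
        have "0 < h x" using hpos[OF that] .
        moreover have "0 \<le> \<phi>0 (H x x0)" using \<phi>0(2) by blast
        ultimately show ?thesis unfolding f0_def by simp
      qed
      have "f0 e = h e * \<phi>0 x0" unfolding f0_def using He by simp
      moreover have "0 < h e" using hpos[OF grp_e[OF G]] .
      ultimately have "0 < f0 e" using \<phi>0(4) by simp
      hence eS: "e \<in> S" unfolding S_def using grp_e[OF G] by simp
      have Spos: "emeasure m S \<noteq> 0" using open_pos[OF G cont haar Sopen eS] .
      have Ssets: "S \<in> sets m" using openin_sets[OF haar Sopen] .
      have "L \<phi>0 \<noteq> 0"
      proof
        assume L0: "L \<phi>0 = 0"
        have nn: "AE x in m. 0 \<le> f0 x"
        proof (rule AE_I2)
          fix x assume "x \<in> space m"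
          thus "0 \<le> f0 x" using f0nn sm by simp
        qed
        have i0: "integrable m f0" unfolding f0_def using integ[OF \<phi>0(1)] .
        have "integral\<^sup>L m f0 = 0" using L0 unfolding L_def f0_def .
        hence AE0: "AE x in m. f0 x = 0" using integral_nonneg_eq_0_iff_AE[OF i0 nn] by simp
        have seteq: "{x \<in> space m. \<not> f0 x = 0} = S"
        proof (rule set_eqI)
          fix x
          show "x \<in> {x \<in> space m. \<not> f0 x = 0} \<longleftrightarrow> x \<in> S"
          proof (cases "x \<in> E")
            case True
            have "\<not> f0 x = 0 \<longleftrightarrow> 0 < f0 x" using f0nn[OF True] by linarith
            thus ?thesis using True unfolding S_def sm by simp
          next
            case False
            thus ?thesis unfolding S_def sm by simp
          qed
        qed
        have "emeasure m S = 0" using AE_iff_measurable[OF Ssets seteq] AE0 by simp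
        thus False using Spos by simp
      qed
      hence n1: "\<exists>\<phi>\<in>Kc. L \<phi> \<noteq> 0" using \<phi>0(1) by blast
      have "L \<phi>0 \<noteq> \<phi>0 \<omega>" using \<open>L \<phi>0 \<noteq> 0\<close> \<phi>0(3) by simp
      hence n2: "\<exists>\<phi>\<in>Kc. L \<phi> \<noteq> \<phi> \<omega>" using \<phi>0(1) by blast
      show ?thesis unfolding nontrivial_radon_def using n1 n2 by (rule conjI)
    qed
    show "\<exists>L. positive_radon L \<and> nontrivial_radon \<omega> L \<and>
                 (\<forall>\<epsilon>\<in>E. \<forall>\<phi>\<in>Kc. image_radon (H \<epsilon>) L \<phi> = h (iv \<epsilon>) * L \<phi>)"
      using pos nontriv equiv by blast
  qed
  obtain h m where hm: "pos_char E mul h" "nonconstant_on E h" "haar_measure E mul m" "upper_integrable E m h"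
    using RG by blast
  then obtain L where L: "positive_radon L" "nontrivial_radon \<omega> L"
    "\<forall>\<epsilon>\<in>E. \<forall>\<phi>\<in>Kc. image_radon (H \<epsilon>) L \<phi> = h (iv \<epsilon>) * L \<phi>"
    using main by blast
  have "homogeneous_radon E H L"
    unfolding homogeneous_radon_def
  proof (intro conjI ballI)
    show "positive_radon L" using L(1) .
  next
    fix \<epsilon> assume \<epsilon>: "\<epsilon> \<in> E"
    have "0 < h (iv \<epsilon>)" using hm(1) grp_ivE[OF G \<epsilon>] unfolding pos_char_def by blast
    thus "\<exists>c>0. \<forall>\<phi>\<in>Kc. image_radon (H \<epsilon>) L \<phi> = c * L \<phi>" using L(3) \<epsilon> by blast
  qed
  thus ?thesis using main L(2) by blast
qed

end
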